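(* Let $L\in R[x][\partial]$ have positive order and let $c$ be a non-unit element of $R$. If $L$ is $R$-primitive and $c$ divides $\mathrm{lc}_\partial(L)$, then $c$ divides $\mathrm{lc}_\partial(Q)$ for every $Q\in\mathrm{cont}(L)\setminus\{0\}$.
   Context: $R$ is a principal ideal domain with quotient field $Q_R$; $\sigma$ is an $R$-automorphism of $R[x]$ with $\sigma(x)=\gamma x+\tau$ ($\gamma,\tau\in R$, $\gamma$ a unit), $\delta$ an $R$-linear $\sigma$-derivation of $R[x]$ ($\delta(fg)=\sigma(f)\delta(g)+\delta(f)g$) with $\deg\delta(x)\le1$; $R[x][\partial]$ is the Ore algebra with $\partial p=\sigma(p)\partial+\delta(p)$, inside $Q_R(x)[\partial]$. $\mathrm{lc}_\partial$ denotes the leading coefficient with respect to $\partial$, and $\mathrm{cont}(L)=Q_R(x)[\partial]L\cap R[x][\partial]$. Writing $L=a_kf_k\partial^k+\dots+a_0f_0$ with $a_i\in R$ and $f_i\in R[x]$ primitive (gcd of coefficients $1$), $L$ is $R$-primitive if $\gcd(a_0,\dots,a_k)=1$. *)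

theory Defs
  imports "HOL-Computational_Algebra.Polynomial" "HOL-Computational_Algebra.Fraction_Field"
begin

definition ideal_R :: "'a::comm_ring_1 set \<Rightarrow> bool" where
  "ideal_R I \<longleftrightarrow> I \<noteq> {} \<and> (\<forall>x\<in>I. \<forall>y\<in>I. x + y \<in> I) \<and> (\<forall>x\<in>I. \<forall>r. r * x \<in> I)"

definition pid_type :: "'a::idom itself \<Rightarrow> bool" where
  "pid_type _ \<longleftrightarrow> (\<forall>I::'a set. ideal_R I \<longrightarrow> (\<exists>g. I = {r * g | r. True}))"

definition sigma_of :: "'a::comm_ring_1 \<Rightarrow> 'a \<Rightarrow> 'a poly \<Rightarrow> 'a poly" where
  "sigma_of \<gamma> \<tau> p = pcompose p [:\<tau>, \<gamma>:]"

(* Ore operators are represented as polynomials in \<partial> with coefficients in K.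
   Left multiplication by \<partial>:  \<partial> (a \<partial>^i) = sigma(a) \<partial>^(i+1) + delta(a) \<partial>^i *)
definition ore_dmul :: "('k \<Rightarrow> 'k) \<Rightarrow> ('k \<Rightarrow> 'k) \<Rightarrow> 'k::comm_ring_1 poly \<Rightarrow> 'k poly" where
  "ore_dmul s d L = pCons 0 (map_poly s L) + map_poly d L"

definition ore_mult :: "('k \<Rightarrow> 'k) \<Rightarrow> ('k \<Rightarrow> 'k) \<Rightarrow> 'k::comm_ring_1 poly \<Rightarrow> 'k poly \<Rightarrow> 'k poly" where
  "ore_mult s d P L = (\<Sum>j\<le>degree P. smult (coeff P j) ((ore_dmul s d ^^ j) L))"

definition sigmaF :: "('a::idom poly \<Rightarrow> 'a poly) \<Rightarrow> 'a poly fract \<Rightarrow> 'a poly fract" where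
  "sigmaF s y = (SOME z. \<exists>p q. q \<noteq> 0 \<and> y = Fract p q \<and> z = Fract (s p) (s q))"

definition deltaF :: "('a::idom poly \<Rightarrow> 'a poly) \<Rightarrow> ('a poly \<Rightarrow> 'a poly) \<Rightarrow> 'a poly fract \<Rightarrow> 'a poly fract" where
  "deltaF s d y = (SOME z. \<exists>p q. q \<noteq> 0 \<and> y = Fract p q \<and>
      z = Fract (q * d p - p * d q) (q * s q))"

definition embF :: "'a::idom poly poly \<Rightarrow> 'a poly fract poly" where
  "embF L = map_poly (\<lambda>p. Fract p 1) L"

(* cont(L) = Q_R(x)[\<partial>] L \<inter> R[x][\<partial>] *)
definition ore_cont :: "('a::idom poly \<Rightarrow> 'a poly) \<Rightarrow> ('a poly \<Rightarrow> 'a poly) \<Rightarrow> 'a poly poly \<Rightarrow> 'a poly poly set" where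
  "ore_cont s d L = {Q. \<exists>P. embF Q = ore_mult (sigmaF s) (deltaF s d) P (embF L)}"

definition primitive_R :: "'a::idom poly \<Rightarrow> bool" where
  "primitive_R f \<longleftrightarrow> (\<forall>d. (\<forall>j. d dvd coeff f j) \<longrightarrow> d dvd 1)"

definition R_primitive :: "'a::idom poly poly \<Rightarrow> bool" where
  "R_primitive L \<longleftrightarrow> (\<exists>a f. (\<forall>i. coeff L i = smult (a i) (f i) \<and> primitive_R (f i)) \<and>
      (\<forall>d. (\<forall>i\<le>degree L. d dvd a i) \<longrightarrow> d dvd 1))"

end

theory Submission imports Defs begin

lemma smult_sum_right: "smult k (sum f A) = (\<Sum>i\<in>A. smult k (f i))"
  by (induct A rule: infinite_finite_induct) (simp_all add: smult_add_right)

lemma ore_mult_sum: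
  assumes "degree P \<le> N"
  shows "ore_mult s d P L = (\<Sum>j\<le>N. smult (coeff P j) ((ore_dmul s d ^^ j) L))"
  unfolding ore_mult_def
  by (rule sum.mono_neutral_left) (use assms in \<open>auto, metis coeff_eq_0 smult_0_left not_le\<close>)

lemma ore_mult_add_left:
  "ore_mult s d (P1 + P2) L = ore_mult s d P1 L + ore_mult s d P2 L"
proof -
  let ?N = "max (degree P1) (degree P2)"
  have "degree (P1 + P2) \<le> ?N" by (rule degree_add_le) auto
  then show ?thesis
    by (simp add: ore_mult_sum[of _ ?N] ore_mult_sum[of P1 ?N] ore_mult_sum[of P2 ?N]
        smult_add_left sum.distrib)
qed

lemma ore_mult_smult_left:
  "ore_mult s d (smult k P) L = smult k (ore_mult s d P L)"
  by (simp add: ore_mult_sum[OF degree_smult_le] ore_mult_sum[of P "degree P"]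
        smult_sum_right mult.assoc)

lemma ore_mult_monom:
  "ore_mult s d (monom a m) L = smult a ((ore_dmul s d ^^ m) L)"
proof -
  have "ore_mult s d (monom a m) L = (\<Sum>j\<le>m. smult (coeff (monom a m) j) ((ore_dmul s d ^^ j) L))"
    by (rule ore_mult_sum) (simp add: degree_monom_le)
  also have "\<dots> = (\<Sum>j\<in>{m}. smult (coeff (monom a m) j) ((ore_dmul s d ^^ j) L))"
    by (rule sum.mono_neutral_right) (auto simp: coeff_monom)
  finally show ?thesis by (simp add: coeff_monom)
qed


lemma embF_pCons: "embF (pCons c X) = pCons (Fract c 1) (embF X)"
  unfolding embF_def by (rule map_poly_pCons) (simp add: fract_collapse)

lemma embF_smult: "embF (smult c X) = smult (Fract c 1) (embF X)"
  unfolding embF_def by (rule map_poly_smult) (simp_all add: fract_collapse)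

lemma clear_denom: "\<exists>v P'. v \<noteq> 0 \<and> P = smult (Fract 1 v) (embF P')"
proof (induct P rule: pCons_induct)
  case 0
  show ?case by (intro exI[of _ 1] exI[of _ 0]) (simp add: embF_def)
next
  case (pCons a P)
  then obtain v0 P0 where v0: "v0 \<noteq> 0" and P: "P = smult (Fract 1 v0) (embF P0)" by blast
  obtain x y where a: "a = Fract x y" and y: "y \<noteq> 0" by (cases a)
  have e1: "Fract (x * v0) (y * v0) = a"
    using a y v0 by (simp add: eq_fract)
  have e2: "Fract y (y * v0) = Fract 1 v0"
    using y v0 by (simp add: eq_fract)
  have "pCons a P = smult (Fract 1 (y * v0)) (embF (pCons (x * v0) (smult y P0)))"
    by (simp add: embF_pCons embF_smult e1 e2 P)
  moreover have "y * v0 \<noteq> 0" using y v0 by simp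
  ultimately show ?case by blast
qed

lemma smult_inj: fixes k :: "'b::idom" shows "k \<noteq> 0 \<Longrightarrow> smult k X = smult k Y \<Longrightarrow> X = Y"
  by (metis smult_eq_0_iff diff_eq_eq smult_diff_right add_0)

lemma strip:
  fixes X :: "'b::idom poly"
  assumes "\<not> [:k:] dvd X"
  shows "\<exists>A B. X = A + B \<and> [:k:] dvd B \<and> \<not> k dvd lead_coeff A"
  using assms
proof (induct "degree X" arbitrary: X rule: less_induct)
  case less
  show ?case
  proof (cases "k dvd lead_coeff X")
    case False
    then show ?thesis by (intro exI[of _ X] exI[of _ 0]) simp
  next
    case True
    then obtain c where c: "lead_coeff X = k * c" by (auto elim: dvdE)
    define X' where "X' = X - monom (lead_coeff X) (degree X)"
    have mdvd: "[:k:] dvd monom (lead_coeff X) (degree X)"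
      by (rule dvdI[of _ _ "monom c (degree X)"]) (simp add: c smult_monom)
    have XX: "X = X' + monom (lead_coeff X) (degree X)" by (simp add: X'_def)
    have nd: "\<not> [:k:] dvd X'"
      using less.prems mdvd XX by (metis dvd_add)
    then have "X' \<noteq> 0" by auto
    have "coeff X' (degree X) = 0" by (simp add: X'_def)
    moreover have "degree X' \<le> degree X" unfolding X'_def
      by (rule degree_diff_le) (simp_all add: degree_monom_le)
    ultimately have "degree X' < degree X"
      using \<open>X' \<noteq> 0\<close> by (metis le_neq_implies_less leading_coeff_0_iff)
    from less.hyps[OF this nd] obtain A B where "X' = A + B" "[:k:] dvd B" "\<not> k dvd lead_coeff A"
      by blast
    then show ?thesis using XX mdvd
      by (intro exI[of _ A] exI[of _ "B + monom (lead_coeff X) (degree X)"]) (auto simp: add.assoc)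
  qed
qed

definition isprime :: "'b::idom \<Rightarrow> bool" where
  "isprime p \<longleftrightarrow> p \<noteq> 0 \<and> \<not> p dvd 1 \<and> (\<forall>a b. p dvd a * b \<longrightarrow> p dvd a \<or> p dvd b)"

lemma const_dvd_coeff: "[:k:] dvd X \<Longrightarrow> (k::'b::idom) dvd coeff X n"
  by (simp add: const_poly_dvd_iff)

lemma gauss_prime:
  fixes p :: "'b::idom"
  assumes p: "isprime p" and f: "\<not> [:p:] dvd f" and g: "\<not> [:p:] dvd g"
  shows "\<not> [:p:] dvd f * g"
proof
  assume fg: "[:p:] dvd f * g"
  obtain A B where f': "f = A + B" "[:p:] dvd B" "\<not> p dvd lead_coeff A" using strip[OF f] by blast
  obtain C E where g': "g = C + E" "[:p:] dvd E" "\<not> p dvd lead_coeff C" using strip[OF g] by blast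
  have "f * g = A * C + (A * E + B * C + B * E)" using f' g' by (simp add: algebra_simps)
  moreover have "[:p:] dvd A * E + B * C + B * E" using f' g' by simp
  ultimately have "[:p:] dvd A * C" using fg by (metis dvd_add_left_iff)
  then have "p dvd coeff (A * C) (degree A + degree C)" by (rule const_dvd_coeff)
  then have "p dvd lead_coeff A * lead_coeff C" by (simp add: coeff_mult_degree_sum)
  then show False using p f' g' unfolding isprime_def by blast
qed


definition sdvd_rel :: "('b::idom \<times> 'b) set" where
  "sdvd_rel = {(a, b). a dvd b \<and> \<not> b dvd a \<and> b \<noteq> 0}"

lemma wf_sdvd:
  assumes pid: "pid_type TYPE('b::idom)"
  shows "wf (sdvd_rel :: ('b \<times> 'b) set)"
  unfolding wf_iff_no_infinite_down_chain
proof
  assume "\<exists>f. \<forall>i. (f (Suc i), f i) \<in> (sdvd_rel :: ('b \<times> 'b) set)"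
  then obtain f :: "nat \<Rightarrow> 'b" where f: "\<And>i. (f (Suc i), f i) \<in> sdvd_rel" by blast
  have ch: "f j dvd f i" if "i \<le> j" for i j
    using that
  proof (induct j)
    case 0 then show ?case by simp
  next
    case (Suc j)
    show ?case
    proof (cases "i = Suc j")
      case True then show ?thesis by simp
    next
      case False
      then have "f j dvd f i" using Suc by simp
      moreover have "f (Suc j) dvd f j" using f[of j] by (simp add: sdvd_rel_def)
      ultimately show ?thesis by (rule dvd_trans[rotated])
    qed
  qed
  define I where "I = {x. \<exists>i r. x = r * f i}"
  have "ideal_R I"
    unfolding ideal_R_def
  proof (intro conjI ballI allI)
    show "I \<noteq> {}" unfolding I_def by blast
  next
    fix x y assume "x \<in> I" "y \<in> I"
    then obtain i r j s where x: "x = r * f i" and y: "y = s * f j" unfolding I_def by blast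
    have "f (max i j) dvd x" using ch[of i "max i j"] x by simp
    moreover have "f (max i j) dvd y" using ch[of j "max i j"] y by simp
    ultimately obtain t where "x + y = t * f (max i j)" by (metis dvd_add dvdE mult.commute)
    then show "x + y \<in> I" unfolding I_def by blast
  next
    fix x r assume "x \<in> I"
    then obtain i s where "x = s * f i" unfolding I_def by blast
    then have "r * x = (r * s) * f i" by simp
    then show "r * x \<in> I" unfolding I_def by blast
  qed
  then obtain g where g: "I = {r * g | r. True}" using pid unfolding pid_type_def by blast
  have "g \<in> I" unfolding g by (rule CollectI, rule exI[of _ 1]) simp
  then obtain i r where gi: "g = r * f i" unfolding I_def by blast
  have "f (Suc i) \<in> I" unfolding I_def by (rule CollectI, intro exI[of _ "Suc i"] exI[of _ 1]) simp
  then obtain r' where "f (Suc i) = r' * g" unfolding g by blast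
  then have "f i dvd f (Suc i)" using gi by simp
  then show False using f[of i] by (simp add: sdvd_rel_def)
qed

lemma prime_factor:
  assumes pid: "pid_type TYPE('b::idom)"
  shows "(d::'b) \<noteq> 0 \<Longrightarrow> \<not> d dvd 1 \<Longrightarrow> \<exists>p. isprime p \<and> p dvd d"
proof (induct d rule: wf_induct[OF wf_sdvd[OF pid]])
  case (1 d)
  show ?case
  proof (cases "\<forall>a. a dvd d \<longrightarrow> a dvd 1 \<or> d dvd a")
    case True
    have "isprime d" unfolding isprime_def
    proof (intro conjI allI impI)
      show "d \<noteq> 0" by fact
    next
      show "\<not> d dvd 1" by fact
    next
      fix a b assume dab: "d dvd a * b"
      show "d dvd a \<or> d dvd b"
      proof (cases "d dvd a")
        case False
        define I where "I = {x * d + y * a | x y. True}"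
        have "ideal_R I" unfolding ideal_R_def
        proof (intro conjI ballI allI)
          show "I \<noteq> {}" unfolding I_def by blast
        next
          fix u w assume "u \<in> I" "w \<in> I"
          then obtain x y x' y' where "u = x * d + y * a" "w = x' * d + y' * a" unfolding I_def by blast
          then have "u + w = (x + x') * d + (y + y') * a" by (simp add: algebra_simps)
          then show "u + w \<in> I" unfolding I_def by blast
        next
          fix u r assume "u \<in> I"
          then obtain x y where "u = x * d + y * a" unfolding I_def by blast
          then have "r * u = (r * x) * d + (r * y) * a" by (simp add: algebra_simps)
          then show "r * u \<in> I" unfolding I_def by blast
        qed
        then obtain g where g: "I = {r * g | r. True}" using pid unfolding pid_type_def by blast
        have "g \<in> I" unfolding g by (rule CollectI, rule exI[of _ 1]) simp
        then obtain x0 y0 where g0: "g = x0 * d + y0 * a" unfolding I_def by blast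
        have "d \<in> I" unfolding I_def by (rule CollectI, intro exI[of _ 1] exI[of _ 0]) simp
        then have gd: "g dvd d" unfolding g by auto
        have "a \<in> I" unfolding I_def by (rule CollectI, intro exI[of _ 0] exI[of _ 1]) simp
        then have ga: "g dvd a" unfolding g by auto
        have "\<not> d dvd g" using ga False dvd_trans by blast
        then have "g dvd 1" using True gd by blast
        then obtain w where w: "1 = g * w" by (rule dvdE)
        have "b = d * (x0 * w * b) + (a * b) * (y0 * w)"
          using arg_cong[OF w, of "\<lambda>t. t * b"] unfolding g0 by (simp add: algebra_simps)
        then have "d dvd b" using dab by (metis dvd_add dvd_mult2 dvd_triv_left)
        then show ?thesis by blast
      qed simp
    qed
    then show ?thesis by (intro exI[of _ d]) simp
  next
    case False
    then obtain a where a: "a dvd d" "\<not> a dvd 1" "\<not> d dvd a" by blast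
    have "a \<noteq> 0" using a(1) 1(2) by auto
    moreover have "(a, d) \<in> sdvd_rel" using a 1(2) by (simp add: sdvd_rel_def)
    ultimately obtain p where "isprime p" "p dvd a" using 1(1) a(2) by blast
    then show ?thesis using a(1) dvd_trans by blast
  qed
qed

locale oreR =
  fixes \<gamma> \<tau> :: "'a::idom" and \<delta> :: "'a poly \<Rightarrow> 'a poly"
  assumes gamma_unit: "\<gamma> dvd 1"
    and delta_add: "\<And>p q. \<delta> (p + q) = \<delta> p + \<delta> q"
    and delta_lin: "\<And>r p. \<delta> (smult r p) = smult r (\<delta> p)"
    and delta_deriv: "\<And>f g. \<delta> (f * g) = sigma_of \<gamma> \<tau> f * \<delta> g + \<delta> f * g"
begin

abbreviation sg where "sg \<equiv> sigma_of \<gamma> \<tau>"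
abbreviation D where "D \<equiv> ore_dmul sg \<delta>"
abbreviation M where "M \<equiv> ore_mult sg \<delta>"

lemma sg_add: "sg (p + q) = sg p + sg q"
  by (simp add: sigma_of_def pcompose_add)
lemma sg_mult: "sg (p * q) = sg p * sg q"
  by (simp add: sigma_of_def pcompose_mult)
lemma sg_const[simp]: "sg [:a:] = [:a:]"
  by (simp add: sigma_of_def)
lemma sg_0[simp]: "sg 0 = 0"
  by (simp add: sigma_of_def)
lemma sg_smult: "sg (smult a p) = smult a (sg p)"
  by (simp add: sigma_of_def pcompose_smult)
lemma delta_0[simp]: "\<delta> 0 = 0"
  using delta_add[of 0 0] by (metis add.right_neutral add_left_cancel)

lemma sg_inv: "\<exists>si. (\<forall>f. si (sg f) = f) \<and> (\<forall>a f. si (smult a f) = smult a (si f))"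
proof -
  obtain g where g: "1 = \<gamma> * g" using gamma_unit by (auto elim: dvdE)
  define si where "si f = pcompose f [:-(\<tau>*g), g:]" for f
  have "pcompose [:\<tau>, \<gamma>:] [:-(\<tau>*g), g:] = [:0, 1:]"
    using g by (simp add: pcompose_pCons algebra_simps)
  then have "si (sg f) = f" for f
    by (simp add: si_def sigma_of_def pcompose_assoc[symmetric])
  moreover have "si (smult a f) = smult a (si f)" for a f
    by (simp add: si_def pcompose_smult)
  ultimately show ?thesis by blast
qed

lemma sg_eq0: "sg f = 0 \<longleftrightarrow> f = 0"
proof -
  obtain si where si: "\<And>f. si (sg f) = f" using sg_inv by auto
  have "sg f = 0 \<Longrightarrow> f = 0"
  proof -
    assume "sg f = 0"
    then have "si (sg f) = si (sg 0)" by simp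
    then show "f = 0" by (simp only: si)
  qed
  then show ?thesis by auto
qed

lemma sg_dvd: "[:p:] dvd sg f \<longleftrightarrow> [:p:] dvd f"
proof
  assume "[:p:] dvd f"
  then obtain h where "f = smult p h" by (auto elim: dvdE)
  then have "sg f = [:p:] * sg h" by (simp add: sg_smult)
  then show "[:p:] dvd sg f" by (rule dvdI)
next
  assume "[:p:] dvd sg f"
  then obtain h where h: "sg f = smult p h" by (auto elim: dvdE)
  obtain si where si1: "\<And>f. si (sg f) = f" and si2: "\<And>a f. si (smult a f) = smult a (si f)"
    using sg_inv by auto
  have "f = si (sg f)" by (simp only: si1)
  also have "\<dots> = smult p (si h)" by (simp only: h si2)
  finally have "f = smult p (si h)" .
  moreover have "smult p (si h) = [:p:] * si h" by simp
  ultimately show "[:p:] dvd f" by (metis dvdI)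
qed

lemma sgpow_eq0: "(sg ^^ j) f = 0 \<longleftrightarrow> f = 0"
proof (induct j)
  case (Suc j)
  have "(sg ^^ Suc j) f = sg ((sg ^^ j) f)" by simp
  then show ?case using Suc sg_eq0[of "(sg ^^ j) f"] by simp
qed simp

lemma sgpow_dvd: "[:p:] dvd (sg ^^ j) f \<longleftrightarrow> [:p:] dvd f"
proof (induct j)
  case (Suc j)
  have "(sg ^^ Suc j) f = sg ((sg ^^ j) f)" by simp
  then show ?case using Suc sg_dvd[of p "(sg ^^ j) f"] by simp
qed simp

lemma coeff_D: "coeff (D X) n = (case n of 0 \<Rightarrow> 0 | Suc m \<Rightarrow> sg (coeff X m)) + \<delta> (coeff X n)"
proof -
  have 1: "coeff (D X) n = coeff (pCons 0 (map_poly sg X)) n + coeff (map_poly \<delta> X) n"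
    by (simp add: ore_dmul_def)
  have 2: "coeff (map_poly \<delta> X) n = \<delta> (coeff X n)" by (rule coeff_map_poly) simp
  have 3: "coeff (pCons 0 (map_poly sg X)) n = (case n of 0 \<Rightarrow> 0 | Suc m \<Rightarrow> sg (coeff X m))"
    by (cases n) (simp_all add: coeff_map_poly)
  show ?thesis unfolding 1 2 3 ..
qed

lemma D_add: "D (X + Y) = D X + D Y"
  by (rule poly_eqI) (simp add: coeff_D sg_add delta_add split: nat.split)

lemma D_smult: "D (smult [:p:] X) = smult [:p:] (D X)"
proof -
  have "\<delta> ([:p:] * x) = [:p:] * \<delta> x" for x
    using delta_lin[of p x] by simp
  then show ?thesis
    by (intro poly_eqI) (simp add: coeff_D sg_smult algebra_simps split: nat.split)
qed

lemma Dpow_add: "(D ^^ j) (X + Y) = (D ^^ j) X + (D ^^ j) Y"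
  by (induct j) (simp_all add: D_add)

lemma Dpow_smult: "(D ^^ j) (smult [:p:] X) = smult [:p:] ((D ^^ j) X)"
  by (induct j) (simp_all add: D_smult)

lemma D_top:
  assumes "degree Y \<le> n"
  shows "degree (D Y) \<le> Suc n \<and> coeff (D Y) (Suc n) = sg (coeff Y n)"
proof
  show "degree (D Y) \<le> Suc n"
  proof (rule degree_le, intro allI impI)
    fix i assume "Suc n < i"
    then show "coeff (D Y) i = 0" using assms
      by (auto simp: coeff_D coeff_eq_0 split: nat.split)
  qed
  show "coeff (D Y) (Suc n) = sg (coeff Y n)" using assms
    by (simp add: coeff_D coeff_eq_0)
qed

lemma Dpow_top:
  assumes "degree Y \<le> n"
  shows "degree ((D ^^ j) Y) \<le> n + j \<and> coeff ((D ^^ j) Y) (n + j) = (sg ^^ j) (coeff Y n)"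
proof (induct j)
  case 0 then show ?case using assms by simp
next
  case (Suc j)
  then show ?case using D_top[of "(D ^^ j) Y" "n + j"] by simp
qed

lemma M_add_right: "M P (X + Y) = M P X + M P Y"
  by (simp add: ore_mult_def Dpow_add smult_add_right sum.distrib)

lemma M_smult_right: "M P (smult [:p:] X) = smult [:p:] (M P X)"
  by (simp add: ore_mult_def Dpow_smult smult_sum_right mult.commute)

lemma M_top:
  "degree (M P L) \<le> degree P + degree L \<and>
   coeff (M P L) (degree P + degree L) = lead_coeff P * (sg ^^ degree P) (lead_coeff L)"
proof
  have deg: "degree (smult (coeff P j) ((D ^^ j) L)) \<le> degree P + degree L" if "j \<le> degree P" for j
    using Dpow_top[of L "degree L" j] that degree_smult_le[of "coeff P j" "(D ^^ j) L"] by linarith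
  show "degree (M P L) \<le> degree P + degree L"
    unfolding ore_mult_def by (rule degree_sum_le) (use deg in auto)
  have z: "coeff (smult (coeff P j) ((D ^^ j) L)) (degree P + degree L) = 0" if "j < degree P" for j
    using Dpow_top[of L "degree L" j] that by (simp add: coeff_eq_0)
  have "coeff (M P L) (degree P + degree L) =
      (\<Sum>j\<le>degree P. coeff (smult (coeff P j) ((D ^^ j) L)) (degree P + degree L))"
    by (simp add: ore_mult_def coeff_sum)
  also have "\<dots> = coeff (smult (coeff P (degree P)) ((D ^^ degree P) L)) (degree P + degree L)"
  proof -
    have e: "{..degree P} = insert (degree P) {..<degree P}" by auto
    have "(\<Sum>j<degree P. coeff (smult (coeff P j) ((D ^^ j) L)) (degree P + degree L)) = 0"
      by (rule sum.neutral) (use z in blast)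
    then show ?thesis unfolding e by (subst sum.insert) auto
  qed
  also have "\<dots> = lead_coeff P * (sg ^^ degree P) (lead_coeff L)"
    using Dpow_top[of L "degree L" "degree P"] by (simp add: add.commute)
  finally show "coeff (M P L) (degree P + degree L) = lead_coeff P * (sg ^^ degree P) (lead_coeff L)" .
qed


lemma delta_1[simp]: "\<delta> 1 = 0"
proof -
  have s1: "sg 1 = 1" by (simp add: sigma_of_def pcompose_1)
  have "\<delta> 1 = \<delta> 1 + \<delta> 1" using delta_deriv[of 1 1] by (simp only: s1 mult_1_left mult_1_right)
  then show ?thesis by (metis add.right_neutral add_left_cancel)
qed

lemma sigmaF_emb: "sigmaF sg (Fract p 1) = Fract (sg p) 1"
  unfolding sigmaF_def
proof (rule someI2_ex)
  show "\<exists>z p' q'. q' \<noteq> 0 \<and> Fract p 1 = Fract p' q' \<and> z = Fract (sg p') (sg q')"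
    by (intro exI[of _ "Fract (sg p) (sg 1)"] exI[of _ p] exI[of _ 1]) simp
next
  fix z assume "\<exists>p' q'. q' \<noteq> 0 \<and> Fract p 1 = Fract p' q' \<and> z = Fract (sg p') (sg q')"
  then obtain p' q' where q: "q' \<noteq> 0" and e: "Fract p 1 = Fract p' q'" and z: "z = Fract (sg p') (sg q')"
    by blast
  have pq: "p' = p * q'" using e q by (simp add: eq_fract)
  have "sg q' \<noteq> 0" using q sg_eq0 by blast
  then show "z = Fract (sg p) 1" using z pq by (simp add: eq_fract sg_mult)
qed

lemma deltaF_emb: "deltaF sg \<delta> (Fract p 1) = Fract (\<delta> p) 1"
  unfolding deltaF_def
proof (rule someI2_ex)
  show "\<exists>z p' q'. q' \<noteq> 0 \<and> Fract p 1 = Fract p' q' \<and> z = Fract (q' * \<delta> p' - p' * \<delta> q') (q' * sg q')"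
    by (intro exI[of _ "Fract (1 * \<delta> p - p * \<delta> 1) (1 * sg 1)"] exI[of _ p] exI[of _ 1]) simp
next
  fix z assume "\<exists>p' q'. q' \<noteq> 0 \<and> Fract p 1 = Fract p' q' \<and> z = Fract (q' * \<delta> p' - p' * \<delta> q') (q' * sg q')"
  then obtain p' q' where q: "q' \<noteq> 0" and e: "Fract p 1 = Fract p' q'"
      and z: "z = Fract (q' * \<delta> p' - p' * \<delta> q') (q' * sg q')"
    by blast
  have pq: "p' = q' * p" using e q by (simp add: eq_fract mult.commute)
  have nz: "q' * sg q' \<noteq> 0" using q sg_eq0 by simp
  have "q' * \<delta> p' - p' * \<delta> q' = q' * sg q' * \<delta> p"
    unfolding pq delta_deriv by (simp add: algebra_simps)
  then show "z = Fract (\<delta> p) 1" using z nz by (simp add: eq_fract)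
qed

lemma sigmaF_0[simp]: "sigmaF sg 0 = 0"
  using sigmaF_emb[of 0] by (simp add: fract_collapse)
lemma deltaF_0[simp]: "deltaF sg \<delta> 0 = 0"
  using deltaF_emb[of 0] by (simp add: fract_collapse)

lemma coeff_embF: "coeff (embF X) n = Fract (coeff X n) 1"
  unfolding embF_def by (rule coeff_map_poly) (simp add: fract_collapse)

lemma coeff_dmul_gen:
  assumes "s 0 = 0" "d 0 = 0"
  shows "coeff (ore_dmul s d X) n = (case n of 0 \<Rightarrow> 0 | Suc m \<Rightarrow> s (coeff X m)) + d (coeff X n)"
proof -
  have 1: "coeff (ore_dmul s d X) n = coeff (pCons 0 (map_poly s X)) n + coeff (map_poly d X) n"
    by (simp add: ore_dmul_def)
  have 2: "coeff (map_poly d X) n = d (coeff X n)" by (rule coeff_map_poly) (rule assms)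
  have 3: "coeff (pCons 0 (map_poly s X)) n = (case n of 0 \<Rightarrow> 0 | Suc m \<Rightarrow> s (coeff X m))"
    by (cases n) (simp_all add: coeff_map_poly assms)
  show ?thesis unfolding 1 2 3 ..
qed

lemma DF_emb: "ore_dmul (sigmaF sg) (deltaF sg \<delta>) (embF X) = embF (D X)"
proof (rule poly_eqI)
  fix n
  show "coeff (ore_dmul (sigmaF sg) (deltaF sg \<delta>) (embF X)) n = coeff (embF (D X)) n"
    by (cases n) (simp_all add: coeff_dmul_gen coeff_embF coeff_D sigmaF_emb deltaF_emb fract_collapse)
qed

lemma DFpow_emb: "(ore_dmul (sigmaF sg) (deltaF sg \<delta>) ^^ j) (embF X) = embF ((D ^^ j) X)"
  by (induct j) (simp_all add: DF_emb)

lemma Fract_add1: "Fract (a + b) 1 = Fract a 1 + Fract b 1"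
  by simp

lemma Fract_sum: "Fract (sum f A) 1 = (\<Sum>i\<in>A. Fract (f i) 1)"
  by (induct A rule: infinite_finite_induct) (simp_all add: fract_collapse Fract_add1)

lemma degree_embF: "degree (embF X) = degree X"
  unfolding embF_def by (rule degree_map_poly) (simp add: eq_fract Zero_fract_def)

lemma MF_emb: "ore_mult (sigmaF sg) (deltaF sg \<delta>) (embF P) (embF L) = embF (M P L)"
proof (rule poly_eqI)
  fix n
  show "coeff (ore_mult (sigmaF sg) (deltaF sg \<delta>) (embF P) (embF L)) n = coeff (embF (M P L)) n"
    by (simp add: ore_mult_def degree_embF coeff_sum DFpow_emb coeff_embF Fract_sum)
qed


lemma trans3: "a = b \<Longrightarrow> b = c \<Longrightarrow> c = d \<Longrightarrow> a = d" by simp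

lemma sgpow_smult: "(sg ^^ m) (smult c h) = smult c ((sg ^^ m) h)"
  by (induct m) (simp_all add: sg_smult)

lemma M_zero_left[simp]: "M 0 L = 0"
  by (simp add: ore_mult_def)

lemma M_lead:
  assumes "P \<noteq> 0" "L \<noteq> 0"
  shows "degree (M P L) = degree P + degree L \<and> lead_coeff (M P L) = lead_coeff P * (sg ^^ degree P) (lead_coeff L)"
proof -
  have t: "degree (M P L) \<le> degree P + degree L"
     "coeff (M P L) (degree P + degree L) = lead_coeff P * (sg ^^ degree P) (lead_coeff L)"
    using M_top by blast+
  have nz: "lead_coeff P * (sg ^^ degree P) (lead_coeff L) \<noteq> 0"
    using assms sgpow_eq0 by simp
  then have "degree P + degree L \<le> degree (M P L)" using t(2) by (metis le_degree)
  then have d: "degree (M P L) = degree P + degree L" using t(1) by simp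
  then show ?thesis using t(2) by simp
qed

lemma pdvd_smult: "[:[:p:]:] dvd X \<longleftrightarrow> (\<exists>Y. X = smult [:p:] Y)"
proof
  assume "[:[:p:]:] dvd X"
  then obtain Y where "X = [:[:p:]:] * Y" by (rule dvdE)
  then show "\<exists>Y. X = smult [:p:] Y" by auto
next
  assume "\<exists>Y. X = smult [:p:] Y"
  then obtain Y where "X = smult [:p:] Y" by blast
  then have "X = [:[:p:]:] * Y" by simp
  then show "[:[:p:]:] dvd X" by (rule dvdI)
qed

lemma S0:
  assumes p: "isprime p" and P: "\<not> [:[:p:]:] dvd P" and L: "\<not> [:[:p:]:] dvd L"
  shows "\<not> [:[:p:]:] dvd M P L"
proof
  assume PL: "[:[:p:]:] dvd M P L"
  obtain A B where f': "P = A + B" "[:[:p:]:] dvd B" "\<not> [:p:] dvd lead_coeff A" using strip[OF P] by blast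
  obtain C E where g': "L = C + E" "[:[:p:]:] dvd E" "\<not> [:p:] dvd lead_coeff C" using strip[OF L] by blast
  obtain B' where B': "B = smult [:p:] B'" using f'(2) pdvd_smult by blast
  obtain E' where E': "E = smult [:p:] E'" using g'(2) pdvd_smult by blast
  have "M P L = M A C + (M A E + M B C + M B E)"
    using f' g' by (simp add: M_add_right ore_mult_add_left algebra_simps)
  moreover have "[:[:p:]:] dvd M A E + M B C + M B E"
    unfolding B' E' pdvd_smult
    by (intro exI[of _ "M A E' + M B' C + M B' (smult [:p:] E')"])
       (simp add: M_smult_right ore_mult_smult_left smult_add_right)
  ultimately have "[:[:p:]:] dvd M A C" using PL by (metis dvd_add_left_iff)
  then have "[:p:] dvd coeff (M A C) (degree A + degree C)" by (rule const_dvd_coeff)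
  moreover have "coeff (M A C) (degree A + degree C) = lead_coeff A * (sg ^^ degree A) (lead_coeff C)"
    using M_top by blast
  ultimately have dv: "[:p:] dvd lead_coeff A * (sg ^^ degree A) (lead_coeff C)" by simp
  have n: "\<not> [:p:] dvd (sg ^^ degree A) (lead_coeff C)" using g'(3) sgpow_dvd by blast
  show False using gauss_prime[OF p f'(3) n] dv by (rule notE)
qed

lemma cont_rep:
  assumes "Q \<in> ore_cont sg \<delta> L"
  shows "\<exists>v P'. v \<noteq> 0 \<and> smult v Q = M P' L"
proof -
  obtain P where P: "embF Q = ore_mult (sigmaF sg) (deltaF sg \<delta>) P (embF L)"
    using assms unfolding ore_cont_def by blast
  obtain v P' where v: "v \<noteq> 0" and P': "P = smult (Fract 1 v) (embF P')"
    using clear_denom by blast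
  have e: "embF Q = smult (Fract 1 v) (embF (M P' L))"
    using P unfolding P' ore_mult_smult_left MF_emb .
  have "smult v Q = M P' L"
  proof (rule poly_eqI)
    fix n
    have "Fract (coeff Q n) 1 = Fract (coeff (M P' L) n) v"
      using arg_cong[OF e, of "\<lambda>X. coeff X n"] by (simp add: coeff_embF)
    then show "coeff (smult v Q) n = coeff (M P' L) n"
      using v by (simp add: eq_fract mult.commute)
  qed
  then show ?thesis using v by blast
qed


lemma descent:
  assumes pid: "pid_type TYPE('a)" and p: "isprime p" and L: "\<not> [:[:p:]:] dvd L"
  shows "\<forall>v P'. lead_coeff v = z \<longrightarrow> v \<noteq> 0 \<longrightarrow> smult v Q = M P' L \<longrightarrow>
     (\<exists>v' P''. v' \<noteq> 0 \<and> \<not> [:p:] dvd v' \<and> smult v' Q = M P'' L)"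
proof (induct z rule: wf_induct[OF wf_sdvd[OF pid]])
  case (1 z)
  show ?case
  proof (intro allI impI)
    fix v P' assume z: "lead_coeff v = z" and v: "v \<noteq> 0" and e: "smult v Q = M P' L"
    show "\<exists>v' P''. v' \<noteq> 0 \<and> \<not> [:p:] dvd v' \<and> smult v' Q = M P'' L"
    proof (cases "[:p:] dvd v")
      case False then show ?thesis using v e by blast
    next
      case True
      then obtain v1 where v1: "v = [:p:] * v1" by (rule dvdE)
      have p0: "p \<noteq> 0" using p unfolding isprime_def by auto
      have v10: "v1 \<noteq> 0" using v v1 by auto
      have vv: "smult [:p:] (smult v1 Q) = smult v Q" unfolding v1 by (simp only: smult_smult)
      have "M P' L = smult [:p:] (smult v1 Q)" unfolding vv e ..
      then have "[:[:p:]:] dvd M P' L" using pdvd_smult by blast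
      then have "[:[:p:]:] dvd P'" using S0[OF p _ L] by blast
      then obtain P1 where P1: "P' = smult [:p:] P1" using pdvd_smult by blast
      have ms: "M P' L = smult [:p:] (M P1 L)"
        unfolding P1 by (rule ore_mult_smult_left)
      have "smult [:p:] (smult v1 Q) = smult [:p:] (M P1 L)"
        using vv e ms by (rule trans3)
      then have e1: "smult v1 Q = M P1 L" using smult_inj[of "[:p:]" "smult v1 Q" "M P1 L"] p0 by simp
      have lc: "lead_coeff v = p * lead_coeff v1" using v1 by (simp add: lead_coeff_mult)
      have "(lead_coeff v1, z) \<in> sdvd_rel"
        unfolding sdvd_rel_def
      proof (clarsimp, intro conjI)
        have "z = lead_coeff v1 * p" using z lc by (simp add: mult.commute)
        then show "lead_coeff v1 dvd z" by (rule dvdI)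
        show "z \<noteq> 0" unfolding z[symmetric] using v by simp
        show "\<not> z dvd lead_coeff v1"
        proof
          assume "z dvd lead_coeff v1"
          then obtain k where k: "lead_coeff v1 = z * k" by (rule dvdE)
          have "lead_coeff v1 * 1 = z * k" using k by simp
          also have "\<dots> = (p * lead_coeff v1) * k" using z lc by simp
          also have "\<dots> = lead_coeff v1 * (p * k)" by (simp only: ac_simps)
          finally have "lead_coeff v1 * 1 = lead_coeff v1 * (p * k)" .
          moreover have "lead_coeff v1 \<noteq> 0" using v10 by simp
          ultimately have "1 = p * k" using mult_left_cancel by blast
          then have "p dvd 1" by (rule dvdI)
          then show False using p unfolding isprime_def by blast
        qed
      qed
      then have "\<forall>v P'. lead_coeff v = lead_coeff v1 \<longrightarrow> v \<noteq> 0 \<longrightarrow> smult v Q = M P' L \<longrightarrow>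
         (\<exists>v' P''. v' \<noteq> 0 \<and> \<not> [:p:] dvd v' \<and> smult v' Q = M P'' L)" using 1 by blast
      from this[rule_format, OF refl v10 e1] show ?thesis .
    qed
  qed
qed

lemma main_loc:
  assumes pid: "pid_type TYPE('a)"
    and L0: "L \<noteq> 0"
    and Lnd: "\<And>p. isprime p \<Longrightarrow> \<not> [:[:p:]:] dvd L"
    and dvd_lc: "[:c:] dvd lead_coeff L"
    and Q: "Q \<in> ore_cont sg \<delta> L" and Q0: "Q \<noteq> 0"
  shows "[:c:] dvd lead_coeff Q"
proof -
  have c0: "c \<noteq> 0" using dvd_lc L0 by auto
  have key: "[:d:] dvd lead_coeff Q \<and> d \<noteq> 0" if "d dvd c" for d
    using that
  proof (induct d rule: wf_induct[OF wf_sdvd[OF pid]])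
    case (1 d)
    have d0: "d \<noteq> 0" using 1(2) c0 by auto
    show ?case
    proof (cases "d dvd 1")
      case True
      then obtain e where "1 = d * e" by (rule dvdE)
      then have "[:d:] * [:e:] = [:1:]" by (simp add: mult.commute)
      then have "1 = [:d:] * [:e:]" by (simp add: pCons_one)
      then have "[:d:] dvd 1" by (rule dvdI)
      then have "[:d:] dvd lead_coeff Q" by (rule dvd_trans) simp
      then show ?thesis using d0 by blast
    next
      case False
      obtain p where p: "isprime p" "p dvd d" using prime_factor[OF pid d0 False] by blast
      from p(2) obtain d' where dd: "d = p * d'" by (rule dvdE)
      have p0: "p \<noteq> 0" using p unfolding isprime_def by auto
      have d'0: "d' \<noteq> 0" using d0 dd by auto
      have rel: "(d', d) \<in> sdvd_rel"
        unfolding sdvd_rel_def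
      proof (clarsimp, intro conjI)
        show "d' dvd d" using dd by simp
        show "d \<noteq> 0" by fact
        show "\<not> d dvd d'"
        proof
          assume "d dvd d'"
          then obtain k where k: "d' = d * k" by (rule dvdE)
          have "d' * 1 = d * k" using k by simp
          also have "\<dots> = (p * d') * k" using dd by simp
          also have "\<dots> = d' * (p * k)" by (simp only: ac_simps)
          finally have "d' * 1 = d' * (p * k)" .
          then have "1 = p * k" using mult_left_cancel[OF d'0] by blast
          then have "p dvd 1" by (rule dvdI)
          then show False using p unfolding isprime_def by blast
        qed
      qed
      have dc: "d' dvd c"
      proof -
        have "d' dvd d" using dd by simp
        then show ?thesis using 1(2) by (rule dvd_trans)
      qed
      have IH: "[:d':] dvd lead_coeff Q" using 1(1)[rule_format, OF rel dc] by (rule conjunct1)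
      then obtain w where w: "lead_coeff Q = [:d':] * w" by (rule dvdE)
      obtain v0 P0 where v0: "v0 \<noteq> 0" "smult v0 Q = M P0 L" using cont_rep[OF Q] by blast
      note dsc = descent[OF pid p(1) Lnd[OF p(1)], of "lead_coeff v0" Q, rule_format, OF refl v0]
      then obtain v P' where v: "v \<noteq> 0" "\<not> [:p:] dvd v" and e: "smult v Q = M P' L"
        by blast
      have P'0: "P' \<noteq> 0"
      proof
        assume "P' = 0"
        then have "smult v Q = 0" using e by simp
        then show False using v(1) Q0 by simp
      qed
      have "lead_coeff (M P' L) = lead_coeff P' * (sg ^^ degree P') (lead_coeff L)"
        using M_lead[OF P'0 L0] by blast
      then have "lead_coeff (smult v Q) = lead_coeff P' * (sg ^^ degree P') (lead_coeff L)"
        unfolding e .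
      then have lq: "v * lead_coeff Q = lead_coeff P' * (sg ^^ degree P') (lead_coeff L)"
        using v(1) by simp
      obtain h where h: "lead_coeff L = [:c:] * h" using dvd_lc by (rule dvdE)
      have "(sg ^^ degree P') (lead_coeff L) = [:c:] * (sg ^^ degree P') h"
        unfolding h by (simp add: sgpow_smult)
      then have "v * lead_coeff Q = [:c:] * (lead_coeff P' * (sg ^^ degree P') h)"
        using lq by (simp only: ac_simps)
      then have cv: "[:c:] dvd v * lead_coeff Q" by (rule dvdI)
      have "[:d:] dvd [:c:]" using 1(2) by (simp add: const_poly_dvd_const_poly_iff)
      then have "[:d:] dvd v * lead_coeff Q" using cv by (rule dvd_trans)
      then obtain k where k: "v * lead_coeff Q = [:d:] * k" by (rule dvdE)
      have dp: "[:d:] = [:p:] * [:d':]" using dd by simp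
      have "[:d':] * (v * w) = v * lead_coeff Q" unfolding w by (simp only: ac_simps)
      also have "\<dots> = [:d':] * ([:p:] * k)" unfolding k dp by (simp only: ac_simps)
      finally have "[:d':] * (v * w) = [:d':] * ([:p:] * k)" .
      moreover have d'n: "[:d':] \<noteq> 0" using d'0 by simp
      ultimately have "v * w = [:p:] * k" using mult_left_cancel[OF d'n] by blast
      then have "[:p:] dvd v * w" by (rule dvdI)
      then have "[:p:] dvd w" using gauss_prime[OF p(1) v(2)] by blast
      then obtain u where "w = [:p:] * u" by (rule dvdE)
      then have "lead_coeff Q = [:d:] * u" using w dd by (simp add: ac_simps)
      then have "[:d:] dvd lead_coeff Q" by (rule dvdI)
      then show ?thesis using d0 by blast
    qed
  qed
  show ?thesis using key[of c] by simp
qed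

end


lemma Rprim_nd:
  assumes prim: "R_primitive L" and p: "isprime (p::'a::idom)"
  shows "\<not> [:[:p:]:] dvd L"
proof
  assume dL: "[:[:p:]:] dvd L"
  obtain a f where af: "\<And>i. coeff L i = smult (a i) (f i)" "\<And>i. primitive_R (f i)"
    and g: "\<And>d. (\<forall>i\<le>degree L. d dvd a i) \<Longrightarrow> d dvd 1"
    using prim unfolding R_primitive_def by blast
  have "p dvd a i" for i
  proof -
    have "[:p:] dvd coeff L i" using dL by (rule const_dvd_coeff)
    then have "[:p:] dvd [:a i:] * f i" using af(1)[of i] by simp
    moreover have "\<not> [:p:] dvd f i"
    proof
      assume "[:p:] dvd f i"
      then have "\<forall>j. p dvd coeff (f i) j" by (simp add: const_poly_dvd_iff)
      then have "p dvd 1" using af(2)[of i] unfolding primitive_R_def by blast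
      then show False using p unfolding isprime_def by blast
    qed
    ultimately have "[:p:] dvd [:a i:]" using gauss_prime[OF p] by blast
    then show ?thesis by (simp add: const_poly_dvd_const_poly_iff)
  qed
  then have "p dvd 1" using g by blast
  then show False using p unfolding isprime_def by blast
qed

theorem mainTheorem4:
  fixes \<gamma> \<tau> c :: "'a::idom"
    and \<delta> :: "'a poly \<Rightarrow> 'a poly"
    and L :: "'a poly poly"
  assumes pid: "pid_type TYPE('a)"
    and gamma_unit: "\<gamma> dvd 1"
    and delta_add: "\<And>p q. \<delta> (p + q) = \<delta> p + \<delta> q"
    and delta_lin: "\<And>r p. \<delta> (smult r p) = smult r (\<delta> p)"
    and delta_deriv: "\<And>f g. \<delta> (f * g) = sigma_of \<gamma> \<tau> f * \<delta> g + \<delta> f * g"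
    and delta_x: "degree (\<delta> [:0, 1:]) \<le> 1"
    and ord: "degree L > 0"
    and nonunit: "\<not> c dvd 1"
    and prim: "R_primitive L"
    and dvd_lc: "[:c:] dvd lead_coeff L"
  shows "\<forall>Q \<in> ore_cont (sigma_of \<gamma> \<tau>) \<delta> L - {0}. [:c:] dvd lead_coeff Q"
proof
  interpret oreR \<gamma> \<tau> \<delta>
    by unfold_locales (fact gamma_unit delta_add delta_lin delta_deriv)+
  fix Q assume Q: "Q \<in> ore_cont (sigma_of \<gamma> \<tau>) \<delta> L - {0}"
  have L0: "L \<noteq> 0" using ord by auto
  show "[:c:] dvd lead_coeff Q"
    by (rule main_loc[OF pid L0 Rprim_nd[OF prim] dvd_lc]) (use Q in auto)
qed

end
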